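(* Consider the Team Surviving Orienteers setting described in the context, with feasible path set $\mathcal{X}(p_s,\omega)$ and priorities $d_j>0$. Define the set function $J:2^{\mathcal{X}(p_s,\omega)}\to\mathbb{R}$ by $$J(X)=\sum_{j=1}^V d_j\,\mathbb{E}\Big[1-\prod_{\rho\in X}\big(1-z_j(\rho)\big)\Big]=\sum_{j=1}^V d_j\Big(1-\prod_{\rho\in X}\big(1-\mathbb{E}[z_j(\rho)]\big)\Big),$$ i.e. the weighted expected number of nodes visited by at least one robot when robots follow the paths in $X$. Then $J$ is normalized, non-negative, monotone and submodular.
   Context: Let $\mathcal{G}=(\mathcal{V},\mathcal{E})$ be a finite simple graph with node set $\mathcal{V}=\{1,\dots,V\}$ and edge weights $\omega:\mathcal{E}\to(0,1]$, where $\omega(e)$ is the probability of surviving traversal of edge $e$. A path $\rho$ is a sequence of nodes $\rho(0),\rho(1),\dots,\rho(\lvert\rho\rvert)$ with $(\rho(n-1),\rho(n))\in\mathcal{E}$ for each $n$; $\lvert\rho\rvert$ is its number of edges. For a path $\rho$, let $s_1(\rho),\dots,s_{\lvert\rho\rvert}(\rho)$ be independent Bernoulli random variables with $\mathbb{P}\{s_n(\rho)=1\}=\omega((\rho(n-1),\rho(n)))$, let $a_n(\rho)=\prod_{i=1}^n s_i(\rho)$, and for each node $j$ let $z_j(\rho)=\max_{n=1,\dots,\lvert\rho\rvert} a_n(\rho)\,\mathbb{I}\{\rho(n)=j\}$ (the indicator that a robot following $\rho$ reaches node $j$). Random variables associated with distinct paths are independent. Given a start node $v_s$, a terminal node $v_t$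 and $p_s\in(0,1]$, the feasible set $\mathcal{X}(p_s,\omega)$ is the (assumed nonempty) set of paths $\rho$ with $\rho(0)=v_s$, $\rho(\lvert\rho\rvert)=v_t$ and $\mathbb{P}\{a_{\lvert\rho\rvert}(\rho)=1\}\ge p_s$. Normalized means $J(\emptyset)=0$; monotone means $J(X)\le J(X')$ for $X\subseteq X'$; submodular means $J(X\cup\{\rho\})-J(X)\ge J(X'\cup\{\rho\})-J(X')$ for all $X\subseteq X'\subset\mathcal{X}(p_s,\omega)$ and $\rho\in\mathcal{X}(p_s,\omega)\setminus X'$. *)

theory Defs
  imports "HOL-Probability.Probability"
begin

text \<open>Graph on nodes {1..V}, edge set E of ordered pairs (symmetric, irreflexive = simple undirected graph).
  A path is a nonempty list of nodes; rho(n) = rho ! n, |rho| = length rho - 1.\<close>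

definition simple_graph :: "nat \<Rightarrow> (nat \<times> nat) set \<Rightarrow> bool" where
  "simple_graph V E \<longleftrightarrow> E \<subseteq> {1..V} \<times> {1..V} \<and> (\<forall>a b. (a, b) \<in> E \<longrightarrow> (b, a) \<in> E) \<and> (\<forall>a. (a, a) \<notin> E)"

definition valid_weights :: "(nat \<times> nat) set \<Rightarrow> (nat \<times> nat \<Rightarrow> real) \<Rightarrow> bool" where
  "valid_weights E \<omega> \<longleftrightarrow> (\<forall>e\<in>E. 0 < \<omega> e \<and> \<omega> e \<le> 1) \<and> (\<forall>a b. (a, b) \<in> E \<longrightarrow> \<omega> (a, b) = \<omega> (b, a))"

definition plen :: "nat list \<Rightarrow> nat" where
  "plen \<rho> = length \<rho> - 1"

definition is_path :: "(nat \<times> nat) set \<Rightarrow> nat list \<Rightarrow> bool" where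
  "is_path E \<rho> \<longleftrightarrow> \<rho> \<noteq> [] \<and> (\<forall>n\<in>{1..plen \<rho>}. (\<rho> ! (n - 1), \<rho> ! n) \<in> E)"

definition surv_pmf :: "(nat \<times> nat \<Rightarrow> real) \<Rightarrow> nat list \<Rightarrow> (nat \<Rightarrow> bool) pmf" where
  "surv_pmf \<omega> \<rho> = Pi_pmf {1..plen \<rho>} False (\<lambda>n. bernoulli_pmf (\<omega> (\<rho> ! (n - 1), \<rho> ! n)))"

definition a_var :: "(nat \<Rightarrow> bool) \<Rightarrow> nat \<Rightarrow> real" where
  "a_var s n = (\<Prod>i\<in>{1..n}. if s i then 1 else 0)"

text \<open>z_j(rho) = max_{n=1..|rho|} a_n(rho) * I{rho(n) = j}; the extra 0 only matters for |rho| = 0 (empty max := 0), since all terms are >= 0.\<close>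
definition z_var :: "nat list \<Rightarrow> nat \<Rightarrow> (nat \<Rightarrow> bool) \<Rightarrow> real" where
  "z_var \<rho> j s = Max (insert 0 ((\<lambda>n. a_var s n * (if \<rho> ! n = j then 1 else 0)) ` {1..plen \<rho>}))"

definition Ez :: "(nat \<times> nat \<Rightarrow> real) \<Rightarrow> nat list \<Rightarrow> nat \<Rightarrow> real" where
  "Ez \<omega> \<rho> j = measure_pmf.expectation (surv_pmf \<omega> \<rho>) (z_var \<rho> j)"

definition surv_prob :: "(nat \<times> nat \<Rightarrow> real) \<Rightarrow> nat list \<Rightarrow> real" where
  "surv_prob \<omega> \<rho> = measure_pmf.prob (surv_pmf \<omega> \<rho>) {s. a_var s (plen \<rho>) = 1}"

definition feasible :: "(nat \<times> nat) set \<Rightarrow> (nat \<times> nat \<Rightarrow> real) \<Rightarrow> nat \<Rightarrow> nat \<Rightarrow> real \<Rightarrow> nat list set" where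
  "feasible E \<omega> vs vt ps = {\<rho>. is_path E \<rho> \<and> \<rho> ! 0 = vs \<and> \<rho> ! plen \<rho> = vt \<and> surv_prob \<omega> \<rho> \<ge> ps}"

definition J_obj :: "nat \<Rightarrow> (nat \<Rightarrow> real) \<Rightarrow> (nat \<times> nat \<Rightarrow> real) \<Rightarrow> nat list set \<Rightarrow> real" where
  "J_obj V d \<omega> X = (\<Sum>j=1..V. d j * (1 - (\<Prod>\<rho>\<in>X. 1 - Ez \<omega> \<rho> j)))"

end

theory Submission
  imports Defs
begin

lemma a_bounds: "0 \<le> a_var s n \<and> a_var s n \<le> 1"
  unfolding a_var_def by (auto intro!: prod_nonneg prod_le_1)

lemma z_bounds: "0 \<le> z_var r j s \<and> z_var r j s \<le> 1"
  unfolding z_var_def using a_bounds[of s]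
  by (auto simp: Max_ge_iff Max_le_iff)

lemma Ez_bounds: "0 \<le> Ez w r j \<and> Ez w r j \<le> 1"
proof -
  have int: "integrable (measure_pmf (surv_pmf w r)) (z_var r j)"
    by (rule measure_pmf.integrable_const_bound[where B=1]) (use z_bounds in auto)
  show ?thesis unfolding Ez_def
    using z_bounds int
    by (auto intro!: integral_nonneg_AE measure_pmf.integral_le_const)
qed

lemma P_bounds: "0 \<le> (\<Prod>r\<in>X. 1 - Ez w r j) \<and> (\<Prod>r\<in>X. 1 - Ez w r j) \<le> 1"
  using Ez_bounds by (auto intro!: prod_nonneg prod_le_1 simp: add_le_cancel_left)

lemma P_mono:
  assumes "finite X'" "X \<subseteq> X'"
  shows "(\<Prod>r\<in>X'. 1 - Ez w r j) \<le> (\<Prod>r\<in>X. 1 - Ez w r j)"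
proof -
  have fX: "finite X" using assms finite_subset by blast
  have "(\<Prod>r\<in>X'. 1 - Ez w r j) = (\<Prod>r\<in>X. 1 - Ez w r j) * (\<Prod>r\<in>X'-X. 1 - Ez w r j)"
    using prod.subset_diff[OF assms(2) assms(1)] by (simp add: mult.commute)
  also have "\<dots> \<le> (\<Prod>r\<in>X. 1 - Ez w r j) * 1"
    using P_bounds[where X=X and w=w and j=j] P_bounds[where X="X'-X" and w=w and j=j] by (intro mult_left_mono) auto
  finally show ?thesis by simp
qed

lemma J_nonneg:
  assumes "\<forall>j\<in>{1..V}. d j > 0"
  shows "J_obj V d w X \<ge> 0"
  unfolding J_obj_def using assms P_bounds[where X=X and w=w]
  by (intro sum_nonneg mult_nonneg_nonneg) (auto simp: less_imp_le)

lemma J_mono: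
  assumes "\<forall>j\<in>{1..V}. d j > 0" "finite X'" "X \<subseteq> X'"
  shows "J_obj V d w X \<le> J_obj V d w X'"
  unfolding J_obj_def using assms P_mono[OF assms(2,3), where w=w]
  by (intro sum_mono) (auto intro!: mult_left_mono)

lemma J_insert:
  assumes "finite X" "r \<notin> X"
  shows "J_obj V d w (insert r X) - J_obj V d w X
       = (\<Sum>j=1..V. d j * (Ez w r j * (\<Prod>r\<in>X. 1 - Ez w r j)))"
  unfolding J_obj_def using assms
  by (simp add: sum_subtractf[symmetric] algebra_simps)

lemma J_submod:
  assumes "\<forall>j\<in>{1..V}. d j > 0" "finite X'" "X \<subseteq> X'" "r \<notin> X'"
  shows "J_obj V d w (insert r X) - J_obj V d w X \<ge> J_obj V d w (insert r X') - J_obj V d w X'"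
proof -
  have fX: "finite X" using assms finite_subset by blast
  have rX: "r \<notin> X" using assms by blast
  show ?thesis
    unfolding J_insert[OF fX rX] J_insert[OF assms(2,4)]
    using assms(1) P_mono[OF assms(2,3), where w=w] Ez_bounds[of w r]
    by (intro sum_mono) (auto intro!: mult_left_mono)
qed

theorem lemma1:
  fixes V :: nat and E :: "(nat \<times> nat) set" and \<omega> :: "nat \<times> nat \<Rightarrow> real"
    and vs vt :: nat and ps :: real and d :: "nat \<Rightarrow> real"
  assumes "simple_graph V E" and "valid_weights E \<omega>"
    and "vs \<in> {1..V}" and "vt \<in> {1..V}"
    and "0 < ps" and "ps \<le> 1"
    and "feasible E \<omega> vs vt ps \<noteq> {}"
    and "\<forall>j\<in>{1..V}. d j > 0"
  shows "J_obj V d \<omega> {} = 0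
    \<and> (\<forall>X. finite X \<and> X \<subseteq> feasible E \<omega> vs vt ps \<longrightarrow> J_obj V d \<omega> X \<ge> 0)
    \<and> (\<forall>X X'. finite X' \<and> X \<subseteq> X' \<and> X' \<subseteq> feasible E \<omega> vs vt ps
           \<longrightarrow> J_obj V d \<omega> X \<le> J_obj V d \<omega> X')
    \<and> (\<forall>X X' \<rho>. finite X' \<and> X \<subseteq> X' \<and> X' \<subset> feasible E \<omega> vs vt ps
           \<and> \<rho> \<in> feasible E \<omega> vs vt ps - X'
           \<longrightarrow> J_obj V d \<omega> (insert \<rho> X) - J_obj V d \<omega> X
               \<ge> J_obj V d \<omega> (insert \<rho> X') - J_obj V d \<omega> X')"
  using assms(8) J_nonneg J_mono J_submod[OF assms(8)]
  by (auto simp: J_obj_def)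

end
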